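(* There is an absolute constant $c>0$ such that every sufficiently large positive integer $N$ can be written as $N=n_1+n_2$ with positive integers $n_1,n_2$ satisfying $F(n_i)\ge c\log N$ for $i=1,2$.
   Context: For a positive integer $n$, $F(n)$ denotes the distance from $n$ to the nearest prime number. *)

theory Defs
  imports Complex_Main "HOL-Computational_Algebra.Primes"
begin

definition F :: "nat \<Rightarrow> nat" where
  "F n = (LEAST d. \<exists>p. prime p \<and> d = nat \<bar>int n - int p\<bar>)"

end

theory Submission
  imports Defs "HOL-Number_Theory.Number_Theory" "HOL-Analysis.Harmonic_Numbers" "HOL-Real_Asymp.Real_Asymp"
begin


lemma div_Suc_diff:
  fixes q n :: nat assumes "q > 0"
  shows "Suc n div q - n div q = (if q dvd Suc n then 1 else 0)"
  by (simp add: div_Suc dvd_eq_mod_eq_0)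

lemma multiplicity_card:
  fixes p m :: nat assumes p: "prime p" and m: "m > 0"
  shows "multiplicity p m = card {i\<in>{1..m}. p ^ i dvd m}"
proof -
  let ?v = "multiplicity p m"
  have le: "?v \<le> m"
  proof -
    have "p ^ ?v dvd m" by (simp add: multiplicity_dvd)
    then have "p ^ ?v \<le> m" using m by (simp add: dvd_imp_le)
    moreover have "?v < 2 ^ ?v" by (rule less_exp)
    moreover have "2 ^ ?v \<le> p ^ ?v" using prime_ge_2_nat[OF p] by (simp add: power_mono)
    ultimately show ?thesis by linarith
  qed
  have "{i\<in>{1..m}. p ^ i dvd m} = {1..?v}"
  proof safe
    fix i assume "i \<in> {1..m}" "p ^ i dvd m"
    then show "i \<in> {1..?v}" using m p
      by (auto intro: multiplicity_geI simp: prime_elem_multiplicity_power_distrib)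
  next
    fix i assume "i \<in> {1..?v}"
    then show "i \<in> {1..m}" using le by auto
    show "p ^ i dvd m" using \<open>i \<in> {1..?v}\<close>
      by (meson atLeastAtMost_iff dvd_trans le_imp_power_dvd multiplicity_dvd)
  qed
  then show ?thesis by simp
qed

lemma legendre:
  fixes p :: nat assumes p: "prime p"
  shows "multiplicity p (fact n :: nat) = (\<Sum>i\<in>{1..n}. n div p ^ i)"
proof (induction n)
  case 0 then show ?case by simp
next
  case (Suc n)
  have p1: "p > 1" using prime_gt_1_nat[OF p] .
  have m1: "multiplicity p (fact (Suc n) :: nat) = multiplicity p (Suc n) + multiplicity p (fact n :: nat)"
  proof -
    have "(fact (Suc n) :: nat) = Suc n * fact n" by (simp add: fact_Suc)
    then show ?thesis using p
      by (simp only:) (rule prime_elem_multiplicity_mult_distrib, auto)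
  qed
  have "multiplicity p (Suc n) = card {i\<in>{1..Suc n}. p ^ i dvd Suc n}"
    using multiplicity_card[OF p, of "Suc n"] by simp
  also have "\<dots> = (\<Sum>i\<in>{1..Suc n}. if p ^ i dvd Suc n then 1 else 0)"
    by (simp only: card_eq_sum sum.inter_filter[OF finite_atLeastAtMost])
  also have "\<dots> = (\<Sum>i\<in>{1..Suc n}. Suc n div p ^ i - n div p ^ i)"
  proof (intro sum.cong refl)
    fix i
    have "p ^ i > 0" using p1 by simp
    then show "(if p ^ i dvd Suc n then 1 else 0) = Suc n div p ^ i - n div p ^ i"
      using div_Suc_diff[of "p ^ i" n] by simp
  qed
  finally have m2: "multiplicity p (Suc n) = (\<Sum>i\<in>{1..Suc n}. Suc n div p ^ i - n div p ^ i)" .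
  have m3: "(\<Sum>i\<in>{1..n}. n div p ^ i) = (\<Sum>i\<in>{1..Suc n}. n div p ^ i)"
  proof -
    have "n < 2 ^ n" by (rule less_exp)
    also have "(2::nat) ^ n \<le> 2 ^ Suc n" by simp
    also have "(2::nat) ^ Suc n \<le> p ^ Suc n" using p1 by (intro power_mono) auto
    finally have "n < p ^ Suc n" .
    then show ?thesis by simp
  qed
  have m4: "(\<Sum>i\<in>{1..Suc n}. Suc n div p ^ i - n div p ^ i) + (\<Sum>i\<in>{1..Suc n}. n div p ^ i)
      = (\<Sum>i\<in>{1..Suc n}. Suc n div p ^ i)"
    by (subst sum.distrib[symmetric], intro sum.cong refl) (simp add: div_le_mono)
  show ?case using m1 m2 m3 m4 Suc.IH by simp
qed

lemma div_double_le:
  fixes n q :: nat assumes "q > 0"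
  shows "2 * (n div q) \<le> (2 * n) div q" "(2 * n) div q \<le> 2 * (n div q) + 1"
proof -
  have e: "2 * n = 2 * (n mod q) + (2 * (n div q)) * q"
  proof -
    have "n = n mod q + (n div q) * q" using div_mult_mod_eq[of n q] by simp
    then have "2 * n = 2 * (n mod q + (n div q) * q)" by simp
    then show ?thesis by (simp only: add_mult_distrib2 mult.assoc)
  qed
  have b: "n mod q < q" using assms by simp
  have "(2 * n) div q = 2 * (n div q) + (2 * (n mod q)) div q"
    using assms by (subst e, subst div_mult_self1) simp_all
  moreover have "(2 * (n mod q)) div q \<le> 1"
  proof -
    have "2 * (n mod q) < 2 * q" using b by simp
    then have "(2 * (n mod q)) div q < 2" using assms by (simp add: div_less_iff_less_mult)
    then show ?thesis by simp
  qed
  ultimately show "2 * (n div q) \<le> (2 * n) div q" "(2 * n) div q \<le> 2 * (n div q) + 1" by simp_all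
qed

lemma binom_mult_bound:
  fixes p n :: nat assumes p: "prime p" and n: "n > 0"
  shows "p ^ multiplicity p ((2*n) choose n) \<le> 2 * n"
proof -
  have p1: "p > 1" using prime_gt_1_nat[OF p] .
  let ?C = "(2*n) choose n"
  let ?v = "multiplicity p ?C"
  have C0: "?C \<noteq> 0" by simp
  have "fact n * fact n * ?C = (fact (2*n) :: nat)"
    using binomial_fact_lemma[of n "2*n"] by simp
  then have "multiplicity p (fact n * fact n * ?C) = multiplicity p (fact (2*n) :: nat)" by simp
  then have eq: "multiplicity p (fact n :: nat) + multiplicity p (fact n :: nat) + ?v
      = multiplicity p (fact (2*n) :: nat)"
    using p C0 by (simp add: prime_elem_multiplicity_mult_distrib)
  have ext: "(\<Sum>i\<in>{1..n}. n div p ^ i) = (\<Sum>i\<in>{1..2*n}. n div p ^ i)"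
  proof (rule sum.mono_neutral_left)
    show "\<forall>i\<in>{1..2 * n} - {1..n}. n div p ^ i = 0"
    proof
      fix i assume "i \<in> {1..2 * n} - {1..n}"
      then have "i > n" by auto
      have "n < 2 ^ n" by (rule less_exp)
      also have "\<dots> \<le> 2 ^ i" using \<open>i > n\<close> by (simp add: power_increasing)
      also have "\<dots> \<le> p ^ i" using p1 by (simp add: power_mono)
      finally show "n div p ^ i = 0" by simp
    qed
  qed auto
  have "?v = (\<Sum>i\<in>{1..2*n}. 2*n div p ^ i) - 2 * (\<Sum>i\<in>{1..2*n}. n div p ^ i)"
    using eq legendre[OF p, of n] legendre[OF p, of "2*n"] ext by simp
  also have "\<dots> = (\<Sum>i\<in>{1..2*n}. 2*n div p ^ i - 2 * (n div p ^ i))"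
  proof -
    have "(\<Sum>i\<in>{1..2*n}. 2*n div p ^ i) = (\<Sum>i\<in>{1..2*n}. 2*n div p ^ i - 2 * (n div p ^ i)) + (\<Sum>i\<in>{1..2*n}. 2 * (n div p ^ i))"
      by (subst sum.distrib[symmetric], intro sum.cong refl) (use p1 div_double_le(1) in simp)
    then show ?thesis by (simp add: sum_distrib_left)
  qed
  also have "\<dots> \<le> (\<Sum>i\<in>{1..2*n}. if p ^ i \<le> 2 * n then 1 else 0)"
  proof (rule sum_mono)
    fix i assume "i \<in> {1..2*n}"
    have q: "p ^ i > 0" using p1 by simp
    show "2*n div p ^ i - 2 * (n div p ^ i) \<le> (if p ^ i \<le> 2 * n then 1 else 0)"
      using div_double_le(2)[OF q, of n] by auto
  qed
  also have "\<dots> = card {i\<in>{1..2*n}. p ^ i \<le> 2 * n}"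
    by (simp only: card_eq_sum sum.inter_filter[OF finite_atLeastAtMost])
  finally have vle: "?v \<le> card {i\<in>{1..2*n}. p ^ i \<le> 2 * n}" .
  show ?thesis
  proof (rule ccontr)
    assume "\<not> p ^ ?v \<le> 2 * n"
    then have big: "2 * n < p ^ ?v" by simp
    have "{i\<in>{1..2*n}. p ^ i \<le> 2 * n} \<subseteq> {1..<?v}"
    proof
      fix i assume "i \<in> {i\<in>{1..2*n}. p ^ i \<le> 2 * n}"
      then have "p ^ i < p ^ ?v" "i \<ge> 1" using big by auto
      then have "i < ?v" using p1 power_less_imp_less_exp by blast
      then show "i \<in> {1..<?v}" using \<open>i \<ge> 1\<close> by simp
    qed
    then have "card {i\<in>{1..2*n}. p ^ i \<le> 2 * n} \<le> card {1..<?v}" by (rule card_mono[rotated]) auto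
    with vle have "?v \<le> ?v - 1" by simp
    moreover have "?v \<ge> 1"
    proof (rule ccontr)
      assume "\<not> ?v \<ge> 1"
      then have "?v = 0" by simp
      with big n show False by simp
    qed
    ultimately show False by simp
  qed
qed

lemma binom_le_pi:
  fixes n :: nat assumes n: "n > 0"
  shows "(2*n) choose n \<le> (2*n) ^ card {p. prime p \<and> p \<le> 2*n}"
proof -
  let ?C = "(2*n) choose n"
  let ?P = "{p. prime p \<and> p \<le> 2*n}"
  have sub: "prime_factors ?C \<subseteq> ?P"
  proof
    fix p assume "p \<in> prime_factors ?C"
    then have pp: "prime p" "p dvd ?C" by auto
    have "fact n * fact n * ?C = (fact (2*n) :: nat)"
      using binomial_fact_lemma[of n "2*n"] by simp
    then have "?C dvd fact (2*n)" by (metis dvd_triv_right)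
    then have "p dvd fact (2*n)" using pp dvd_trans by blast
    then show "p \<in> ?P" using pp by (auto simp: prime_dvd_fact_iff)
  qed
  have finP: "finite ?P" by (rule finite_subset[of _ "{..2*n}"]) auto
  have "?C = (\<Prod>p\<in>prime_factors ?C. p ^ multiplicity p ?C)"
    using prime_factorization_nat[of ?C] by simp
  also have "\<dots> \<le> (\<Prod>p\<in>prime_factors ?C. 2 * n)"
    by (rule prod_mono) (use binom_mult_bound n in auto)
  also have "\<dots> = (2*n) ^ card (prime_factors ?C)" by simp
  also have "\<dots> \<le> (2*n) ^ card ?P"
    using n by (intro power_increasing card_mono finP sub) auto
  finally show ?thesis .
qed

lemma cheb_lower:
  fixes n :: nat assumes n: "n > 0"
  shows "real n * ln 2 \<le> real (card {p. prime p \<and> p \<le> 2*n}) * ln (2 * real n)"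
proof -
  have "(real (2*n) / real n) ^ n \<le> real ((2*n) choose n)"
    by (rule binomial_ge_n_over_k_pow_k) simp
  then have "2 ^ n \<le> real ((2*n) choose n)" using n by simp
  also have "\<dots> \<le> real ((2*n) ^ card {p. prime p \<and> p \<le> 2*n})"
    using binom_le_pi[OF n] by (simp only: of_nat_le_iff)
  finally have "(2::real) ^ n \<le> (2 * real n) ^ card {p. prime p \<and> p \<le> 2*n}" by simp
  then have "ln ((2::real) ^ n) \<le> ln ((2 * real n) ^ card {p. prime p \<and> p \<le> 2*n})"
    using n by (subst ln_le_cancel_iff) auto
  moreover have "ln ((2 * real n) ^ card {p. prime p \<and> p \<le> 2*n}) = real (card {p. prime p \<and> p \<le> 2*n}) * ln (2 * real n)"
    by (rule ln_realpow)
  moreover have "ln ((2::real) ^ n) = real n * ln 2" by (simp add: ln_realpow)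
  ultimately show ?thesis by simp
qed

lemma geom_le:
  fixes q :: nat assumes "q > 1"
  shows "(\<Sum>k<m. (1 / real q) ^ k) \<le> real q / (real q - 1)"
proof -
  have "(\<Sum>k<m. (1 / real q) ^ k) = (1 - (1/real q)^m) / (1 - 1/real q)"
    using assms by (simp add: sum_gp_strict)
  also have "\<dots> \<le> 1 / (1 - 1/real q)"
    using assms by (intro divide_right_mono) auto
  also have "\<dots> = real q / (real q - 1)" using assms by (simp add: field_simps)
  finally show ?thesis .
qed

lemma euler_gen:
  fixes Q :: "nat set" and X :: nat
  assumes "finite Q" "\<forall>p\<in>Q. prime p"
  shows "(\<Sum>n\<in>{n\<in>{1..X}. prime_factors n \<subseteq> Q}. 1 / real n) \<le> (\<Prod>p\<in>Q. real p / (real p - 1))"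
  using assms
proof (induction Q rule: finite_induct)
  case empty
  have "{n\<in>{1..X}. prime_factors n \<subseteq> {}} \<subseteq> {1}"
  proof
    fix n assume "n \<in> {n\<in>{1..X}. prime_factors n \<subseteq> {}}"
    then have "n > 0" "prime_factors n = {}" by auto
    then show "n \<in> {1}" by (metis prime_factorization_nat prod.empty singletonI)
  qed
  then have "(\<Sum>n\<in>{n\<in>{1..X}. prime_factors n \<subseteq> {}}. 1 / real n) \<le> (\<Sum>n\<in>{1}. 1 / real n)"
    by (intro sum_mono2) auto
  then show ?case by simp
next
  case (insert q Q)
  have q: "prime q" using insert by auto
  have q1: "q > 1" using prime_gt_1_nat[OF q] .
  let ?D = "\<lambda>Q. {n\<in>{1..X}. prime_factors n \<subseteq> Q}"
  let ?f = "\<lambda>(k::nat, m::nat). q ^ k * m"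
  have sub: "?D (insert q Q) \<subseteq> ?f ` ({..<Suc X} \<times> ?D Q)"
  proof
    fix n assume nD: "n \<in> ?D (insert q Q)"
    then have n0: "n > 0" "n \<le> X" by auto
    obtain m where nm: "n = q ^ multiplicity q n * m" "\<not> q dvd m"
      by (rule multiplicity_decompose'[of n q]) (use n0 q1 in auto)
    let ?k = "multiplicity q n"
    have m0: "m > 0" using nm n0 by (cases m) auto
    have mle: "m \<le> n" using nm q1 m0 by (metis dvd_imp_le dvd_triv_right n0(1))
    have kle: "q ^ ?k \<le> n" using nm m0 by (metis dvd_imp_le dvd_triv_left n0(1))
    have "?k < 2 ^ ?k" by (rule less_exp)
    also have "\<dots> \<le> q ^ ?k" using q1 by (simp add: power_mono)
    finally have "?k < Suc X" using kle n0 by linarith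
    moreover have "prime_factors m \<subseteq> Q"
    proof
      fix p assume p: "p \<in> prime_factors m"
      then have "p dvd m" "prime p" by auto
      then have "p dvd n" using nm(1) by (metis dvd_mult)
      then have "p \<in> insert q Q" using nD \<open>prime p\<close> n0 by (auto simp: in_prime_factors_iff)
      moreover have "p \<noteq> q" using \<open>p dvd m\<close> nm(2) by auto
      ultimately show "p \<in> Q" by auto
    qed
    ultimately have "(?k, m) \<in> {..<Suc X} \<times> ?D Q" using m0 mle n0 by auto
    then show "n \<in> ?f ` ({..<Suc X} \<times> ?D Q)" using nm(1) by force
  qed
  have "(\<Sum>n\<in>?D (insert q Q). 1 / real n) \<le> (\<Sum>n\<in>?f ` ({..<Suc X} \<times> ?D Q). 1 / real n)"
    by (intro sum_mono2 sub finite_imageI) auto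
  also have "\<dots> \<le> (\<Sum>km\<in>{..<Suc X} \<times> ?D Q. 1 / real (?f km))"
    using sum_image_le[of "{..<Suc X} \<times> ?D Q" "\<lambda>n. 1 / real n" ?f] by (simp add: o_def)
  also have "\<dots> = (\<Sum>k<Suc X. (1 / real q) ^ k) * (\<Sum>m\<in>?D Q. 1 / real m)"
  proof -
    have "(\<Sum>km\<in>{..<Suc X} \<times> ?D Q. 1 / real (?f km)) = (\<Sum>k<Suc X. \<Sum>m\<in>?D Q. (1 / real q) ^ k * (1 / real m))"
      by (subst sum.cartesian_product) (auto intro!: sum.cong simp: power_one_over split: prod.splits)
    also have "\<dots> = (\<Sum>k<Suc X. (1 / real q) ^ k) * (\<Sum>m\<in>?D Q. 1 / real m)"
      by (simp only: sum_product)
    finally show ?thesis .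
  qed
  also have "\<dots> \<le> (real q / (real q - 1)) * (\<Prod>p\<in>Q. real p / (real p - 1))"
    using insert q1 by (intro mult_mono geom_le sum_nonneg) auto
  also have "\<dots> = (\<Prod>p\<in>insert q Q. real p / (real p - 1))"
    using insert by simp
  finally show ?case .
qed

lemma euler_prod:
  fixes z :: nat
  shows "ln (real z + 1) \<le> (\<Prod>p\<in>{p. prime p \<and> p \<le> z}. real p / (real p - 1))"
proof -
  have fin: "finite {p. prime p \<and> p \<le> z}" by (rule finite_subset[of _ "{..z}"]) auto
  have "ln (real z + 1) \<le> harm z" by (rule ln_le_harm)
  also have "harm z = (\<Sum>n\<in>{1..z}. 1 / real n)" by (simp add: harm_def divide_inverse)
  also have "{1..z} = {n\<in>{1..z}. prime_factors n \<subseteq> {p. prime p \<and> p \<le> z}}"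
  proof safe
    fix n p assume "n \<in> {1..z}" "p \<in> prime_factors n"
    then have "p dvd n" "n > 0" "n \<le> z" by (auto simp: in_prime_factors_iff)
    then show "p \<le> z" using dvd_imp_le le_trans by blast
  qed auto
  also have "(\<Sum>n\<in>{n\<in>{1..z}. prime_factors n \<subseteq> {p. prime p \<and> p \<le> z}}. 1 / real n)
      \<le> (\<Prod>p\<in>{p. prime p \<and> p \<le> z}. real p / (real p - 1))"
    by (rule euler_gen[OF fin]) auto
  finally show ?thesis .
qed



lemma pigeon_residue:
  fixes R :: "'e set" and f :: "'e \<Rightarrow> nat"
  assumes "finite R" "p > 0" "\<forall>e\<in>R. f e < p"
  shows "\<exists>b<p. card R \<le> p * card {e\<in>R. f e = b}"
proof (rule ccontr)
  assume "\<not> ?thesis"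
  then have lt: "\<forall>b\<in>{..<p}. p * card {e\<in>R. f e = b} < card R" by auto
  have "card R = (\<Sum>e\<in>R. 1)" by simp
  also have "\<dots> = (\<Sum>b\<in>{..<p}. \<Sum>e\<in>{e\<in>R. f e = b}. 1)"
    using assms by (intro sum.group[symmetric]) auto
  also have "\<dots> = (\<Sum>b\<in>{..<p}. card {e\<in>R. f e = b})" by simp
  finally have eq: "card R = (\<Sum>b\<in>{..<p}. card {e\<in>R. f e = b})" .
  have "p * card R = (\<Sum>b\<in>{..<p}. p * card {e\<in>R. f e = b})"
    by (subst eq) (simp add: sum_distrib_left)
  also have "\<dots> < (\<Sum>b\<in>{..<p}. card R)"
    using assms lt by (intro sum_strict_mono) auto
  also have "\<dots> = p * card R" by simp
  finally show False by simp
qed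

lemma sieve_small:
  fixes U :: "'e set" and r :: "nat \<Rightarrow> 'e \<Rightarrow> nat"
  assumes "finite P" "finite U" "\<forall>p\<in>P. p > 0" "\<forall>p\<in>P. \<forall>e\<in>U. r p e < p"
  shows "\<exists>a. real (card {e\<in>U. \<forall>p\<in>P. r p e \<noteq> a p}) \<le> real (card U) * (\<Prod>p\<in>P. 1 - 1 / real p)"
  using assms
proof (induction P rule: finite_induct)
  case empty then show ?case by simp
next
  case (insert p P)
  then obtain a where a: "real (card {e\<in>U. \<forall>p\<in>P. r p e \<noteq> a p}) \<le> real (card U) * (\<Prod>p\<in>P. 1 - 1 / real p)"
    by auto
  let ?R = "{e\<in>U. \<forall>p\<in>P. r p e \<noteq> a p}"
  have finR: "finite ?R" using insert by simp
  have p0: "p > 0" using insert by simp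
  obtain b where b: "b < p" "card ?R \<le> p * card {e\<in>?R. r p e = b}"
    using pigeon_residue[OF finR p0, of "r p"] insert by auto
  let ?K = "{e\<in>?R. r p e = b}"
  define a' where "a' = a(p := b)"
  have eqS: "{e\<in>U. \<forall>q\<in>insert p P. r q e \<noteq> a' q} = ?R - ?K"
    using insert(2) by (auto simp: a'_def)
  have KR: "card ?K \<le> card ?R" using finR by (intro card_mono) auto
  have finK: "finite ?K" by (rule finite_subset[OF _ finR]) auto
  have "card (?R - ?K) = card ?R - card ?K" using finK by (intro card_Diff_subset) auto
  then have "real (card (?R - ?K)) = real (card ?R) - real (card ?K)"
    using KR by (simp add: of_nat_diff)
  also have "\<dots> \<le> real (card ?R) * (1 - 1 / real p)"
  proof -
    have "real (card ?R) \<le> real p * real (card ?K)" using b(2) by (simp flip: of_nat_mult)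
    then have "real (card ?R) / real p \<le> real (card ?K)" using p0 by (simp add: field_simps)
    then show ?thesis by (simp add: algebra_simps)
  qed
  also have "\<dots> \<le> real (card U) * (\<Prod>p\<in>P. 1 - 1 / real p) * (1 - 1 / real p)"
    using a p0 by (intro mult_right_mono) (auto simp: field_simps)
  also have "\<dots> = real (card U) * (\<Prod>q\<in>insert p P. 1 - 1 / real q)"
    using insert by simp
  finally have "real (card {e\<in>U. \<forall>q\<in>insert p P. r q e \<noteq> a' q}) \<le> real (card U) * (\<Prod>q\<in>insert p P. 1 - 1 / real q)"
    by (simp only: eqS)
  then show ?case by blast
qed

lemma sieve_large:
  fixes U :: "'e set" and r :: "nat \<Rightarrow> 'e \<Rightarrow> nat"
  assumes "finite P" "finite U" "card U \<le> card P"
  shows "\<exists>a. \<forall>e\<in>U. \<exists>p\<in>P. r p e = a p"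
  using assms
proof (induction P arbitrary: U rule: finite_induct)
  case empty then show ?case by simp
next
  case (insert p P)
  show ?case
  proof (cases "U = {}")
    case True then show ?thesis by simp
  next
    case False
    then obtain e0 where e0: "e0 \<in> U" by auto
    have c: "card (U - {e0}) \<le> card P" using insert e0 by (simp add: card_Diff_singleton)
    have fU: "finite (U - {e0})" using insert.prems(1) by simp
    obtain a where a: "\<forall>e\<in>U - {e0}. \<exists>q\<in>P. r q e = a q" using insert.IH[OF fU c] by blast
    define a' where "a' = a(p := r p e0)"
    have "\<forall>e\<in>U. \<exists>q\<in>insert p P. r q e = a' q"
    proof
      fix e assume "e \<in> U"
      show "\<exists>q\<in>insert p P. r q e = a' q"
      proof (cases "e = e0")
        case True then show ?thesis by (auto simp: a'_def)
      next
        case False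
        then obtain q where "q \<in> P" "r q e = a q" using a \<open>e \<in> U\<close> by auto
        moreover have "q \<noteq> p" using \<open>q \<in> P\<close> insert(2) by auto
        ultimately show ?thesis by (auto simp: a'_def)
      qed
    qed
    then show ?thesis by blast
  qed
qed

lemma sieve_combined:
  fixes U :: "'e set" and r :: "nat \<Rightarrow> 'e \<Rightarrow> nat"
  assumes "finite P1" "finite P2" "finite U" "P1 \<inter> P2 = {}" "\<forall>p\<in>P1. p > 0" "\<forall>p\<in>P1. \<forall>e\<in>U. r p e < p"
    and big: "real (card U) * (\<Prod>p\<in>P1. 1 - 1 / real p) \<le> real (card P2)"
  shows "\<exists>a Q. Q \<subseteq> P2 \<and> real (card Q) \<le> real (card U) * (\<Prod>p\<in>P1. 1 - 1 / real p)
           \<and> (\<forall>e\<in>U. \<exists>p\<in>P1 \<union> Q. r p e = a p)"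
proof -
  obtain a1 where a1: "real (card {e\<in>U. \<forall>p\<in>P1. r p e \<noteq> a1 p}) \<le> real (card U) * (\<Prod>p\<in>P1. 1 - 1 / real p)"
    using sieve_small[OF assms(1,3,5,6)] by blast
  let ?R = "{e\<in>U. \<forall>p\<in>P1. r p e \<noteq> a1 p}"
  have "card ?R \<le> card P2" using a1 big by linarith
  then obtain Q where Q: "Q \<subseteq> P2" "card Q = card ?R" "finite Q"
    by (rule obtain_subset_with_card_n)
  obtain a2 where a2: "\<forall>e\<in>?R. \<exists>p\<in>Q. r p e = a2 p"
    using sieve_large[OF Q(3), of ?R r] assms(3) Q(2) by auto
  define a where "a = (\<lambda>p. if p \<in> P1 then a1 p else a2 p)"
  have "\<forall>e\<in>U. \<exists>p\<in>P1 \<union> Q. r p e = a p"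
  proof
    fix e assume e: "e \<in> U"
    show "\<exists>p\<in>P1 \<union> Q. r p e = a p"
    proof (cases "e \<in> ?R")
      case True
      then obtain p where "p \<in> Q" "r p e = a2 p" using a2 by auto
      moreover have "p \<notin> P1" using \<open>p \<in> Q\<close> Q(1) assms(4) by auto
      ultimately show ?thesis by (auto simp: a_def)
    next
      case False
      then obtain p where "p \<in> P1" "r p e = a1 p" using e by auto
      then show ?thesis by (auto simp: a_def)
    qed
  qed
  moreover have "real (card Q) \<le> real (card U) * (\<Prod>p\<in>P1. 1 - 1 / real p)" using Q(2) a1 by simp
  ultimately show ?thesis using Q(1) by blast
qed



lemma F_ge:
  assumes "\<forall>q. prime q \<longrightarrow> q + K < n \<or> n + K < q"
  shows "F n \<ge> K + 1"
proof -
  have ex: "\<exists>d. \<exists>p. prime p \<and> d = nat \<bar>int n - int p\<bar>"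
    using two_is_prime_nat by blast
  from LeastI_ex[OF ex] obtain p where p: "prime p" "F n = nat \<bar>int n - int p\<bar>"
    unfolding F_def by blast
  from assms p(1) have "p + K < n \<or> n + K < p" by blast
  then show ?thesis using p(2) by auto
qed

lemma not_prime_shift:
  fixes p m :: nat and j :: int
  assumes "prime p" "int p dvd int m + j" "int m + j > int p"
  shows "\<not> prime (nat (int m + j))"
proof
  assume pq: "prime (nat (int m + j))"
  let ?q = "nat (int m + j)"
  have qi: "int ?q = int m + j" using assms(3) by simp
  have "int p dvd int ?q" using assms(2) qi by simp
  then have "p dvd ?q" by (simp only: int_dvd_int_iff)
  then have "p = 1 \<or> p = ?q" using pq by (simp add: prime_nat_iff)
  moreover have "p \<noteq> 1" using assms(1) by auto
  moreover have "p < ?q" using assms(3) qi by linarith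
  ultimately show False by auto
qed

lemma construct:
  fixes z y K N B :: nat
  defines "P1 \<equiv> {p. prime p \<and> p \<le> z}"
  defines "P2 \<equiv> {p. prime p \<and> z < p \<and> p \<le> y}"
  assumes zy: "z \<le> y" and y1: "y \<ge> 1"
    and big: "real (2*(2*K+1)) * (\<Prod>p\<in>P1. 1 - 1 / real p) \<le> real (card P2)"
    and Bb: "real (2*(2*K+1)) * (\<Prod>p\<in>P1. 1 - 1 / real p) \<le> real B"
    and N: "N \<ge> (y+K+2) * (z^z * y^B) + (y+K+1)"
  shows "\<exists>n1 n2. n1 > 0 \<and> n2 > 0 \<and> N = n1 + n2 \<and> F n1 \<ge> K+1 \<and> F n2 \<ge> K+1"
proof -
  define U where "U = (UNIV :: bool set) \<times> {-int K..int K}"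
  define r where "r = (\<lambda>p::nat. \<lambda>e::bool\<times>int. if fst e then nat ((- snd e) mod int p) else nat ((int N + snd e) mod int p))"
  have finP1: "finite P1" unfolding P1_def by (rule finite_subset[of _ "{..z}"]) auto
  have finP2: "finite P2" unfolding P2_def by (rule finite_subset[of _ "{..y}"]) auto
  have finU: "finite U" unfolding U_def by simp
  have cardU: "card U = 2*(2*K+1)" unfolding U_def by (simp add: card_cartesian_product)
  have disj: "P1 \<inter> P2 = {}" unfolding P1_def P2_def by auto
  have pos: "\<forall>p\<in>P1. p > 0" unfolding P1_def using prime_gt_0_nat by blast
  have rlt: "\<forall>p\<in>P1. \<forall>e\<in>U. r p e < p"
  proof (intro ballI)
    fix p e assume "p \<in> P1" "e \<in> U"
    then have "int p > 0" using pos by auto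
    then show "r p e < p" unfolding r_def by (auto simp: nat_less_iff)
  qed
  obtain a Q where Q: "Q \<subseteq> P2" "real (card Q) \<le> real (card U) * (\<Prod>p\<in>P1. 1 - 1 / real p)"
      and kill: "\<forall>e\<in>U. \<exists>p\<in>P1 \<union> Q. r p e = a p"
    using sieve_combined[OF finP1 finP2 finU disj pos rlt] big cardU by metis
  define S where "S = P1 \<union> Q"
  have finS: "finite S" unfolding S_def using finP1 Q(1) finP2 finite_subset by blast
  have primeS: "\<forall>p\<in>S. prime p" unfolding S_def P1_def using Q(1) P2_def by auto
  have leS: "\<forall>p\<in>S. p \<le> y" unfolding S_def P1_def using Q(1) P2_def zy by auto
  have "real (card Q) \<le> real B" using Q(2) Bb cardU by (simp only:)
  then have cardQ: "card Q \<le> B" by simp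
  obtain x where x: "\<forall>p\<in>S. [x = a p] (mod p)"
    using chinese_remainder_nat[OF finS, of id a] primeS
    by (metis id_apply primes_coprime)
  define M where "M = (\<Prod>p\<in>S. p)"
  have M0: "M > 0" unfolding M_def using primeS prime_gt_0_nat by (simp add: prod_pos)
  have Mle: "M \<le> z^z * y^B"
  proof -
    have "M = (\<Prod>p\<in>P1. p) * (\<Prod>p\<in>Q. p)" unfolding M_def S_def
      using disj Q(1) finP1 finP2 by (subst prod.union_disjoint) (auto intro: finite_subset)
    also have "(\<Prod>p\<in>P1. p) \<le> (\<Prod>p\<in>P1. z)" by (rule prod_mono) (auto simp: P1_def)
    also have "\<dots> = z ^ card P1" by simp
    also have "\<dots> \<le> z ^ z"
    proof (cases "z = 0")
      case False
      have "card P1 \<le> card {1..z}" unfolding P1_def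
        by (rule card_mono) (auto dest: prime_gt_0_nat)
      then show ?thesis using False by (intro power_increasing) auto
    next
      case True
      then have "P1 = {}" unfolding P1_def using prime_gt_0_nat by fastforce
      then show ?thesis using \<open>z = 0\<close> by simp
    qed
    also have "(\<Prod>p\<in>Q. p) \<le> (\<Prod>p\<in>Q. y)" by (rule prod_mono) (use Q(1) in \<open>auto simp: P2_def\<close>)
    also have "\<dots> = y ^ card Q" by simp
    also have "\<dots> \<le> y ^ B" using cardQ y1 by (intro power_increasing) auto
    finally show ?thesis by (simp add: mult_le_mono)
  qed
  define L where "L = y + K + 1"
  define n1 where "n1 = x mod M + L * M"
  have "L \<le> L * M" using M0 by simp
  then have n1_lo: "n1 \<ge> L" unfolding n1_def by linarith
  have "x mod M < M" using M0 by simp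
  then have n1_hi: "n1 < (L+1) * M" unfolding n1_def by simp
  have "(L+1) * M \<le> (y+K+2) * (z^z * y^B)" unfolding L_def using Mle by (intro mult_le_mono) auto
  then have n1N: "n1 + L \<le> N" using N n1_hi unfolding L_def by linarith
  define n2 where "n2 = N - n1"
  have n2_lo: "n2 \<ge> L" unfolding n2_def using n1N by simp
  have cong: "\<forall>p\<in>S. int n1 mod int p = int (a p) mod int p"
  proof
    fix p assume pS: "p \<in> S"
    have "p dvd M" unfolding M_def using pS finS by (intro dvd_prodI) auto
    then obtain k where k: "M = p * k" by (rule dvdE)
    have "n1 = x mod M + (L * k) * p" unfolding n1_def k by (simp add: algebra_simps)
    then have "n1 mod p = (x mod M) mod p" by (simp only: mod_mult_self1)
    also have "\<dots> = x mod p" using \<open>p dvd M\<close> by (simp add: mod_mod_cancel)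
    also have "\<dots> = a p mod p" using x pS unfolding Cong.cong_def by blast
    finally show "int n1 mod int p = int (a p) mod int p" by (simp flip: of_nat_mod)
  qed
  have killed: "\<forall>e\<in>U. \<exists>p\<in>S. int p dvd (if fst e then int n1 + snd e else int n2 + snd e)"
  proof
    fix e assume eU: "e \<in> U"
    then obtain p where pS: "p \<in> S" and rp: "r p e = a p" using kill unfolding S_def by blast
    have pp: "int p > 0" using primeS pS prime_gt_0_nat by auto
    show "\<exists>p\<in>S. int p dvd (if fst e then int n1 + snd e else int n2 + snd e)"
    proof (cases "fst e")
      case True
      have t: "0 \<le> (- snd e) mod int p" using pp by simp
      have "int (a p) = int (nat ((- snd e) mod int p))" using rp \<open>fst e\<close> by (simp add: r_def)
      also have "\<dots> = (- snd e) mod int p" using t by simp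
      finally have "int (a p) = (- snd e) mod int p" .
      then have "int n1 mod int p = (- snd e) mod int p" using cong pS pp by simp
      then have "int p dvd int n1 - (- snd e)" by (simp add: mod_eq_dvd_iff)
      then show ?thesis using True pS by auto
    next
      case False
      have t: "0 \<le> (int N + snd e) mod int p" using pp by simp
      have "int (a p) = int (nat ((int N + snd e) mod int p))" using rp \<open>\<not> fst e\<close> by (simp add: r_def)
      also have "\<dots> = (int N + snd e) mod int p" using t by simp
      finally have "int (a p) = (int N + snd e) mod int p" .
      then have "int n1 mod int p = (int N + snd e) mod int p" using cong pS pp by simp
      then have "int p dvd int n1 - (int N + snd e)" by (simp add: mod_eq_dvd_iff)
      then have "int p dvd (int N + snd e) - int n1" by (simp add: dvd_diff_commute)
      moreover have "int n2 = int N - int n1" unfolding n2_def using n1N by simp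
      ultimately have "int n2 + snd e = (int N + snd e) - int n1" by simp
      then have "int p dvd int n2 + snd e" using \<open>int p dvd (int N + snd e) - int n1\<close> by (simp only:)
      then show ?thesis using False pS by auto
    qed
  qed
  have Fn: "F n \<ge> K + 1" if nL: "n \<ge> L" and side: "\<forall>j\<in>{-int K..int K}. \<exists>p\<in>S. int p dvd int n + j" for n
  proof (rule F_ge, intro allI impI)
    fix q :: nat assume q: "prime q"
    show "q + K < n \<or> n + K < q"
    proof (rule ccontr)
      assume "\<not> (q + K < n \<or> n + K < q)"
      then have j: "int q - int n \<in> {-int K..int K}" by auto
      then obtain p where pS: "p \<in> S" and d: "int p dvd int n + (int q - int n)" using side by blast
      have "int n + (int q - int n) > int p" using leS pS nL j unfolding L_def by auto
      then have "\<not> prime (nat (int n + (int q - int n)))"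
        using not_prime_shift[OF _ d] primeS pS by blast
      then show False using q by simp
    qed
  qed
  have "F n1 \<ge> K + 1"
  proof (rule Fn[OF n1_lo], intro ballI)
    fix j assume "j \<in> {-int K..int K}"
    then have "(True, j) \<in> U" unfolding U_def by simp
    then show "\<exists>p\<in>S. int p dvd int n1 + j" using killed by fastforce
  qed
  moreover have "F n2 \<ge> K + 1"
  proof (rule Fn[OF n2_lo], intro ballI)
    fix j assume "j \<in> {-int K..int K}"
    then have "(False, j) \<in> U" unfolding U_def by simp
    then show "\<exists>p\<in>S. int p dvd int n2 + j" using killed by fastforce
  qed
  moreover have "n1 > 0" "n2 > 0" "N = n1 + n2" using n1_lo n2_lo n1N unfolding L_def n2_def by auto
  ultimately show ?thesis by blast
qed



lemma prod_one_minus_le: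
  fixes z :: nat assumes "z \<ge> 1"
  shows "(\<Prod>p\<in>{p. prime p \<and> p \<le> z}. 1 - 1 / real p) \<le> 1 / ln (real z + 1)"
proof -
  let ?P = "{p. prime p \<and> p \<le> z}"
  let ?E = "\<Prod>p\<in>?P. real p / (real p - 1)"
  have lnpos: "ln (real z + 1) > 0" using assms by simp
  have E: "ln (real z + 1) \<le> ?E" by (rule euler_prod)
  have "(\<Prod>p\<in>?P. 1 - 1 / real p) = (\<Prod>p\<in>?P. inverse (real p / (real p - 1)))"
  proof (rule prod.cong[OF refl])
    fix p assume "p \<in> ?P"
    then have "real p > 1" using prime_gt_1_nat by auto
    then show "1 - 1 / real p = inverse (real p / (real p - 1))" by (simp add: field_simps)
  qed
  also have "\<dots> = inverse ?E" using prod_inversef[of "\<lambda>p. real p / (real p - 1)" ?P] by (simp add: o_def)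
  also have "\<dots> \<le> inverse (ln (real z + 1))" using E lnpos by (intro le_imp_inverse_le) auto
  finally show ?thesis by (simp add: divide_inverse)
qed

lemma pi_lower:
  fixes z :: nat assumes "z \<ge> 1"
  shows "16 * (real z)^2 * (2/3) / ln (32 * (real z)^2) \<le> real (card {p. prime p \<and> p \<le> 32 * z^2})"
proof -
  define n where "n = 16 * z^2"
  have n0: "n > 0" using assms by (simp add: n_def)
  have c: "real n * ln 2 \<le> real (card {p. prime p \<and> p \<le> 2*n}) * ln (2 * real n)"
    by (rule cheb_lower[OF n0])
  have l: "ln (2 * real n) > 0" using n0 by simp
  have eqn: "16 * (real z)^2 * (2/3) = real n * (2/3)" unfolding n_def by simp
  have "real n * (2/3) \<le> real n * ln 2"
    by (rule mult_left_mono[OF ln2_ge_two_thirds]) simp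
  then have "16 * (real z)^2 * (2/3) \<le> real n * ln 2" by (simp only: eqn)
  also have "\<dots> \<le> real (card {p. prime p \<and> p \<le> 2*n}) * ln (2 * real n)" by (rule c)
  finally have "16 * (real z)^2 * (2/3) / ln (2 * real n) \<le> real (card {p. prime p \<and> p \<le> 2*n})"
    using l by (simp add: divide_le_eq)
  moreover have "2 * real n = 32 * (real z)^2" "2 * n = 32 * z^2" unfolding n_def by simp_all
  ultimately show ?thesis by simp
qed

lemma card_P2:
  fixes z y :: nat assumes "z \<le> y"
  shows "real (card {p. prime p \<and> p \<le> y}) - real z \<le> real (card {p. prime p \<and> z < p \<and> p \<le> y})"
proof -
  let ?A = "{p. prime p \<and> p \<le> y}" and ?B = "{p. prime p \<and> p \<le> z}"
  have fA: "finite ?A" by (rule finite_subset[of _ "{..y}"]) auto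
  have BA: "?B \<subseteq> ?A" using assms by auto
  have eq: "{p. prime p \<and> z < p \<and> p \<le> y} = ?A - ?B" by auto
  have "card (?A - ?B) = card ?A - card ?B" using fA BA by (intro card_Diff_subset) (auto intro: finite_subset)
  moreover have "card ?B \<le> card ?A" using fA BA by (intro card_mono)
  moreover have "card ?B \<le> card {1..z}" by (rule card_mono) (auto dest: prime_gt_0_nat)
  ultimately have "real (card (?A - ?B)) = real (card ?A) - real (card ?B)" "real (card ?B) \<le> real z"
    by (simp_all add: of_nat_diff)
  then show ?thesis unfolding eq by linarith
qed

lemma asy1: "eventually (\<lambda>x::real. (4*x^2+2)/ln(x+1) \<le> 16*x^2*(2/3)/ln(32*x^2) - x) at_top"
  by real_asymp

lemma asy2: "eventually (\<lambda>x::real. (33*x^2+2)*(exp(x*ln x)*exp(((4*x^2+2)/ln(x+1)+1)*ln(32*x^2))) + 33*x^2+1 \<le> exp(10*x^2)) at_top"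
  by real_asymp

lemma main_z:
  fixes z N :: nat
  assumes z1: "z \<ge> 1"
    and A: "(4*(real z)^2+2)/ln(real z+1) \<le> 16*(real z)^2*(2/3)/ln(32*(real z)^2) - real z"
    and C: "(33*(real z)^2+2)*(exp(real z*ln (real z))*exp(((4*(real z)^2+2)/ln(real z+1)+1)*ln(32*(real z)^2))) + 33*(real z)^2+1 \<le> exp(10*(real z)^2)"
    and N: "exp(10*(real z)^2) \<le> real N"
  shows "\<exists>n1 n2. n1 > 0 \<and> n2 > 0 \<and> N = n1 + n2 \<and> F n1 \<ge> z^2+1 \<and> F n2 \<ge> z^2+1"
proof -
  define x where "x = real z"
  have x1: "x \<ge> 1" using z1 unfolding x_def by simp
  define W where "W = 4*x^2+2"
  define B where "B = nat \<lceil>W / ln (x+1)\<rceil>"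
  let ?P1 = "{p. prime p \<and> p \<le> z}"
  let ?Pi = "\<Prod>p\<in>?P1. 1 - 1 / real p"
  have Pi0: "?Pi \<ge> 0" by (intro prod_nonneg) (auto simp: divide_le_eq)
  have Pile: "?Pi \<le> 1 / ln (x + 1)" using prod_one_minus_le[OF z1] unfolding x_def by simp
  have lnp: "ln (x+1) > 0" using x1 by simp
  have Wdef: "real (2*(2*z^2+1)) = W" unfolding W_def x_def by simp
  have W0: "W > 0" unfolding W_def by (simp add: add_nonneg_pos)
  have step1: "real (2*(2*z^2+1)) * ?Pi \<le> W / ln (x+1)"
    unfolding Wdef using mult_left_mono[OF Pile, of W] W0 by simp
  have "real (card {p. prime p \<and> z < p \<and> p \<le> 32*z^2}) \<ge> real (card {p. prime p \<and> p \<le> 32 * z^2}) - real z"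
    by (rule card_P2) (use z1 in \<open>simp add: power2_eq_square\<close>)
  moreover have "real (card {p. prime p \<and> p \<le> 32 * z^2}) \<ge> 16 * x^2 * (2/3) / ln (32 * x^2)"
    using pi_lower[OF z1] unfolding x_def by simp
  ultimately have P2big: "real (card {p. prime p \<and> z < p \<and> p \<le> 32*z^2}) \<ge> W / ln (x+1)"
    using A unfolding W_def x_def by linarith
  have Bb: "W / ln (x+1) \<le> real B" unfolding B_def by linarith
  have Bup: "real B \<le> W / ln (x+1) + 1"
  proof -
    have "W / ln (x+1) \<ge> 0" using W0 lnp by simp
    then show ?thesis unfolding B_def by linarith
  qed
  have Nbig: "N \<ge> (32*z^2+z^2+2) * (z^z * (32*z^2)^B) + (32*z^2+z^2+1)"
  proof -
    have zz: "real (z^z) = exp (x * ln x)"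
    proof -
      have "real (z^z) = x ^ z" unfolding x_def by simp
      also have "\<dots> = exp (ln x) ^ z" using x1 by simp
      also have "\<dots> = exp (real z * ln x)" by (rule exp_of_nat_mult[symmetric])
      finally show ?thesis unfolding x_def .
    qed
    have yB: "real ((32*z^2)^B) \<le> exp ((W / ln (x+1) + 1) * ln (32 * x^2))"
    proof -
      have y0: "32 * x^2 > 0" using x1 by simp
      have "real ((32*z^2)^B) = (32 * x^2) ^ B" unfolding x_def by simp
      also have "\<dots> = exp (ln (32 * x^2)) ^ B" using y0 by simp
      also have "\<dots> = exp (real B * ln (32 * x^2))" by (rule exp_of_nat_mult[symmetric])
      also have "\<dots> \<le> exp ((W / ln (x+1) + 1) * ln (32 * x^2))"
      proof -
        have "x^2 \<ge> 1" using x1 one_le_power[of x 2] by simp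
        then have "ln (32 * x^2) \<ge> 0" by simp
        then have "real B * ln (32 * x^2) \<le> (W / ln (x+1) + 1) * ln (32 * x^2)"
          by (rule mult_right_mono[OF Bup])
        then show ?thesis by simp
      qed
      finally show ?thesis .
    qed
    have "real ((32*z^2+z^2+2) * (z^z * (32*z^2)^B) + (32*z^2+z^2+1))
        = (33*x^2+2) * (real (z^z) * real ((32*z^2)^B)) + 33*x^2+1" unfolding x_def by (simp add: algebra_simps)
    also have "\<dots> \<le> (33*x^2+2) * (exp (x * ln x) * exp ((W / ln (x+1) + 1) * ln (32 * x^2))) + 33*x^2+1"
    proof -
      have "real (z^z) * real ((32*z^2)^B) \<le> exp (x * ln x) * exp ((W / ln (x+1) + 1) * ln (32 * x^2))"
        unfolding zz by (rule mult_left_mono[OF yB]) simp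
      then have "(33*x^2+2) * (real (z^z) * real ((32*z^2)^B)) \<le> (33*x^2+2) * (exp (x * ln x) * exp ((W / ln (x+1) + 1) * ln (32 * x^2)))"
        by (rule mult_left_mono) (simp add: add_nonneg_nonneg)
      then show ?thesis by simp
    qed
    also have "\<dots> \<le> exp(10*x^2)" using C unfolding W_def x_def .
    also have "\<dots> \<le> real N" using N unfolding x_def .
    finally show ?thesis by (simp only: of_nat_le_iff)
  qed
  have zy: "z \<le> 32*z^2" using z1 by (simp add: power2_eq_square)
  have y1: "32*z^2 \<ge> 1" using z1 by simp
  have big: "real (2*(2*z^2+1)) * ?Pi \<le> real (card {p. prime p \<and> z < p \<and> p \<le> 32*z^2})"
    using step1 P2big by linarith
  have Bb': "real (2*(2*z^2+1)) * ?Pi \<le> real B" using step1 Bb by linarith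
  show ?thesis using construct[OF zy y1 big Bb' Nbig] by blast
qed



theorem proposition1:
  shows "\<exists>c::real. c > 0 \<and> (\<exists>N0::nat. \<forall>N\<ge>N0. \<exists>n1 n2::nat.
           n1 > 0 \<and> n2 > 0 \<and> N = n1 + n2 \<and>
           real (F n1) \<ge> c * ln (real N) \<and> real (F n2) \<ge> c * ln (real N))"
proof -
  let ?P = "\<lambda>x::real. (4*x^2+2)/ln(x+1) \<le> 16*x^2*(2/3)/ln(32*x^2) - x \<and>
      (33*x^2+2)*(exp(x*ln x)*exp(((4*x^2+2)/ln(x+1)+1)*ln(32*x^2))) + 33*x^2+1 \<le> exp(10*x^2)"
  have ev: "eventually ?P at_top" using eventually_conj[OF asy1 asy2] .
  have "eventually (\<lambda>z::nat. ?P (real z)) sequentially"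
    by (rule filterlim_real_sequentially[unfolded filterlim_iff, rule_format, OF ev])
  then obtain z0 where z0: "\<And>z. z \<ge> z0 \<Longrightarrow> ?P (real z)" by (auto simp: eventually_sequentially)
  define z1 where "z1 = max z0 1"
  define N0 where "N0 = nat \<lceil>exp (10 * (real z1 + 1)^2)\<rceil>"
  have "\<forall>N\<ge>N0. \<exists>n1 n2::nat. n1 > 0 \<and> n2 > 0 \<and> N = n1 + n2 \<and>
           real (F n1) \<ge> (1/20) * ln (real N) \<and> real (F n2) \<ge> (1/20) * ln (real N)"
  proof (intro allI impI)
    fix N assume NN0: "N \<ge> N0"
    have Nbig: "real N \<ge> exp (10 * (real z1 + 1)^2)"
      using NN0 unfolding N0_def by linarith
    have Npos: "real N > 0" using Nbig by (rule less_le_trans[OF exp_gt_zero])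
    define s where "s = sqrt (ln (real N) / 10)"
    have lnN: "ln (real N) \<ge> 10 * (real z1 + 1)^2"
      using Nbig Npos by (metis ln_exp ln_le_cancel_iff exp_gt_zero)
    have lnN0: "ln (real N) \<ge> 0" using lnN by (smt (verit) zero_le_power2)
    have s2: "s^2 = ln (real N) / 10" unfolding s_def
      by (rule real_sqrt_pow2) (use lnN0 in simp)
    have s0: "s \<ge> 0" unfolding s_def using lnN0 by simp
    have sz: "s \<ge> real z1 + 1"
    proof -
      have "(real z1 + 1)^2 \<le> s^2" using s2 lnN by simp
      then show ?thesis using s0 by (simp add: power2_le_iff_abs_le)
    qed
    define z where "z = nat \<lfloor>s\<rfloor>"
    have zs: "real z \<le> s" "s - 1 < real z" unfolding z_def using s0 by linarith+
    have zz1: "z \<ge> z1" unfolding z_def using sz by linarith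
    then have zz0: "z \<ge> z0" and z1': "z \<ge> 1" unfolding z1_def by auto
    have Pz: "?P (real z)" using z0[OF zz0] .
    have "exp (10 * (real z)^2) \<le> exp (10 * s^2)"
      using zs(1) by (simp add: power_mono)
    also have "\<dots> = real N"
    proof -
      have "10 * s^2 = ln (real N)" using s2 by simp
      then show ?thesis using Npos by simp
    qed
    finally have Nz: "exp (10 * (real z)^2) \<le> real N" .
    obtain n1 n2 where nn: "n1 > 0" "n2 > 0" "N = n1 + n2" "F n1 \<ge> z^2+1" "F n2 \<ge> z^2+1"
      using main_z[OF z1' _ _ Nz] Pz by blast
    have key: "(1/20) * ln (real N) \<le> real (z^2 + 1)"
    proof -
      have "s - 1 \<ge> 0" using sz by simp
      then have "(s - 1)^2 \<le> (real z)^2" using zs(2) by (intro power_mono) auto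
      moreover have "(1/20) * ln (real N) = s^2 / 2" using s2 by simp
      moreover have "s^2/2 \<le> (s-1)^2 + 1"
      proof -
        have "0 \<le> (s-2)^2 / 2" by simp
        then show ?thesis by (simp add: power2_eq_square algebra_simps)
      qed
      ultimately show ?thesis by simp
    qed
    have "real (F n1) \<ge> (1/20) * ln (real N)" using key nn(4) by (meson of_nat_le_iff order.trans)
    moreover have "real (F n2) \<ge> (1/20) * ln (real N)" using key nn(5) by (meson of_nat_le_iff order.trans)
    ultimately show "\<exists>n1 n2::nat. n1 > 0 \<and> n2 > 0 \<and> N = n1 + n2 \<and>
           real (F n1) \<ge> (1/20) * ln (real N) \<and> real (F n2) \<ge> (1/20) * ln (real N)"
      using nn by blast
  qed
  then show ?thesis by (intro exI[of _ "1/20"]) auto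
qed


end
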